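(* For $x\in[-1,1]$, in $L^2(\mu_d)$, $$\mathrm{ReLU}(x)=\frac{1}{\beta(\frac12,\frac{d-1}2)(d-1)}G^{(d)}_0(x)+\frac12G^{(d)}_1(x)+\sum_{k\ge1}(-1)^{k+1}\frac{(2k-3)!!}{\beta(\frac12,\frac{d-1}2)\prod_{j=0}^k(d+2j-1)}B(d,2k)G^{(d)}_{2k}(x).$$ Consequently, for every integer $m\ge1$, $$\big\|P^{(d)}_{\ge2m}\mathrm{ReLU}\big\|_{L^2(\mu_d)}^2=\sum_{k\ge m}\frac{((2k-3)!!)^2B(d,2k)}{\beta(\frac12,\frac{d-1}2)^2\prod_{j=0}^k(d+2j-1)^2}.$$
   Context: $\mu_d$ is the law of $x\cdot e_1$ for $x$ uniform on the unit sphere $\mathcal S^{d-1}(1)$, i.e. density $\frac1{\beta(\frac12,\frac{d-1}2)}(1-x^2)^{\frac{d-3}2}$ on $[-1,1]$, with $\beta$ the Beta function. Gegenbauer polynomials: $G^{(d)}_0=1$, $G^{(d)}_1(x)=x$, $G^{(d)}_k(x)=\frac{d+2k-4}{d+k-3}xG^{(d)}_{k-1}(x)-\frac{k-1}{d+k-3}G^{(d)}_{k-2}(x)$; they satisfy $\mathbb E_{\mu_d}[G^{(d)}_kG^{(d)}_j]=\delta_{jk}B(d,k)^{-1}$, where $B(d,0)=1$ and $B(d,k)=\frac{(k+d-3)!(2k+d-2)}{k!(d-2)!}$ for $k\ge1$. Projections: $P^{(d)}_kf=B(d,k)\langle f,G^{(d)}_k\rangle_{L^2(\mu_d)}G^{(d)}_k$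 and $P^{(d)}_{\ge k}=\sum_{\ell\ge k}P^{(d)}_\ell$. Convention $(-1)!!=1$. *)

theory Defs
  imports "HOL-Analysis.Analysis"
begin

definition mu :: "nat \<Rightarrow> real measure" where
  "mu d = density lborel (\<lambda>x. ennreal (indicator {-1..1} x *
      (1 - x\<^sup>2) powr ((real d - 3) / 2) / Beta (1/2) ((real d - 1) / 2)))"

fun Geg :: "nat \<Rightarrow> nat \<Rightarrow> real \<Rightarrow> real" where
  "Geg d 0 x = 1"
| "Geg d (Suc 0) x = x"
| "Geg d (Suc (Suc j)) x =
     (let k = Suc (Suc j) in
       (real d + 2 * real k - 4) / (real d + real k - 3) * x * Geg d (Suc j) x
       - (real k - 1) / (real d + real k - 3) * Geg d j x)"

definition Bdk :: "nat \<Rightarrow> nat \<Rightarrow> real" where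
  "Bdk d k = (if k = 0 then 1 else
     fact (k + d - 3) * (2 * real k + real d - 2) / (fact k * fact (d - 2)))"

text \<open>Double factorial on integers, with n!! = 1 for n \<le> 0 (in particular (-1)!! = 1).\<close>
function dfact :: "int \<Rightarrow> real" where
  "dfact n = (if n \<le> 0 then 1 else real_of_int n * dfact (n - 2))"
  by auto
termination by (relation "Wellfounded.measure (\<lambda>n. nat n)") auto

declare dfact.simps[simp del]

definition relu :: "real \<Rightarrow> real" where
  "relu x = max x 0"

definition Pk :: "nat \<Rightarrow> nat \<Rightarrow> (real \<Rightarrow> real) \<Rightarrow> real \<Rightarrow> real" where
  "Pk d k f x = Bdk d k * (\<integral>y. f y * Geg d k y \<partial>mu d) * Geg d k x"

text \<open>P_{>=k} f = sum_{l>=k} P_l f, the series taken in L^2(mu_d): an L^2 function which is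
  the L^2(mu_d)-limit of the partial sums sum_{l=k}^{N-1} P_l f.\<close>
definition Pge :: "nat \<Rightarrow> nat \<Rightarrow> (real \<Rightarrow> real) \<Rightarrow> real \<Rightarrow> real" where
  "Pge d k f = (SOME g. g \<in> borel_measurable (mu d) \<and> integrable (mu d) (\<lambda>x. (g x)\<^sup>2) \<and>
      (\<lambda>N. \<integral>x. (g x - (\<Sum>l\<in>{k..<N}. Pk d l f x))\<^sup>2 \<partial>mu d) \<longlonglongrightarrow> 0)"

definition L2sq :: "nat \<Rightarrow> (real \<Rightarrow> real) \<Rightarrow> real" where
  "L2sq d f = (\<integral>x. (f x)\<^sup>2 \<partial>mu d)"

end

theory Submission
  imports Defs "HOL-Computational_Algebra.Polynomial"
begin

fun Gp :: "nat \<Rightarrow> nat \<Rightarrow> real poly" where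
  "Gp d 0 = 1"
| "Gp d (Suc 0) = [:0,1:]"
| "Gp d (Suc (Suc j)) =
     (let k = Suc (Suc j) in
       smult ((real d + 2 * real k - 4) / (real d + real k - 3)) ([:0,1:] * Gp d (Suc j))
       - smult ((real k - 1) / (real d + real k - 3)) (Gp d j))"

lemma poly_Gp: "poly (Gp d k) x = Geg d k x"
  by (induction d k rule: Gp.induct) (simp_all add: Let_def)

definition lin :: "(nat \<Rightarrow> real) \<Rightarrow> real poly \<Rightarrow> real" where
  "lin c p = (\<Sum>i\<le>degree p. coeff p i * c i)"

lemma lin_bound: "degree p \<le> n \<Longrightarrow> lin c p = (\<Sum>i\<le>n. coeff p i * c i)"
  unfolding lin_def by (rule sum.mono_neutral_left) (auto simp: coeff_eq_0)

lemma lin_add: "lin c (p + q) = lin c p + lin c q"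
proof -
  let ?n = "max (degree p) (degree q)"
  have "lin c (p + q) = (\<Sum>i\<le>?n. coeff (p+q) i * c i)"
    by (rule lin_bound) (simp add: degree_add_le)
  also have "\<dots> = (\<Sum>i\<le>?n. coeff p i * c i) + (\<Sum>i\<le>?n. coeff q i * c i)"
    by (simp add: algebra_simps sum.distrib)
  also have "\<dots> = lin c p + lin c q"
    using lin_bound[of p ?n c] lin_bound[of q ?n c] by simp
  finally show ?thesis .
qed

lemma lin_smult: "lin c (smult a p) = a * lin c p"
proof -
  have "lin c (smult a p) = (\<Sum>i\<le>degree p. coeff (smult a p) i * c i)"
    by (rule lin_bound) simp
  then show ?thesis by (simp add: lin_def sum_distrib_left mult.assoc)
qed

lemma lin_0[simp]: "lin c 0 = 0" by (simp add: lin_def)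

lemma lin_minus: "lin c (- p) = - lin c p"
  using lin_smult[of c "-1" p] by simp

lemma lin_diff: "lin c (p - q) = lin c p - lin c q"
  using lin_add[of c p "-q"] lin_minus[of c q] by simp

lemma lin_sum: "lin c (\<Sum>i\<in>A. f i) = (\<Sum>i\<in>A. lin c (f i))"
  by (induction A rule: infinite_finite_induct) (simp_all add: lin_add)

lemma lin_monom: "lin c (monom a n) = a * c n"
proof -
  have "lin c (monom a n) = (\<Sum>i\<le>n. coeff (monom a n) i * c i)"
    by (rule lin_bound) (simp add: degree_monom_le)
  also have "\<dots> = (\<Sum>i\<le>n. if i = n then a * c n else 0)"
    by (intro sum.cong) (auto simp: coeff_monom)
  finally show ?thesis by simp
qed

lemma lin_1: "lin c 1 = c 0"
  using lin_monom[of c 1 0] by (simp add: monom_0 one_pCons)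


lemma linear_poly_eq:
  assumes "\<And>p q. F (p + q) = F p + F q" "\<And>a p. F (smult a p) = a * F p"
    and "\<And>p q. G (p + q) = G p + G q" "\<And>a p. G (smult a p) = a * G p"
    and "\<And>n. F (monom 1 n) = G (monom 1 n)"
  shows "F p = (G p :: real)"
proof -
  have F0: "F 0 = 0" using assms(2)[of 0 0] by simp
  have G0: "G 0 = 0" using assms(4)[of 0 0] by simp
  have Fs: "F (\<Sum>i\<in>A. f i) = (\<Sum>i\<in>A. F (f i))" for A f
    by (induction A rule: infinite_finite_induct) (simp_all add: F0 assms(1))
  have Gs: "G (\<Sum>i\<in>A. f i) = (\<Sum>i\<in>A. G (f i))" for A f
    by (induction A rule: infinite_finite_induct) (simp_all add: G0 assms(3))
  have m: "F (monom (coeff p i) i) = G (monom (coeff p i) i)" for i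
    using assms(2)[of "coeff p i" "monom 1 i"] assms(4)[of "coeff p i" "monom 1 i"] assms(5)[of i]
    by (simp add: smult_monom)
  have "F p = F (\<Sum>i\<le>degree p. monom (coeff p i) i)" by (simp add: poly_as_sum_of_monoms)
  also have "\<dots> = (\<Sum>i\<le>degree p. G (monom (coeff p i) i))"
    unfolding Fs by (intro sum.cong refl) (rule m)
  also have "\<dots> = G p" by (simp add: Gs[symmetric] poly_as_sum_of_monoms)
  finally show ?thesis .
qed


definition bet :: "nat \<Rightarrow> real" where "bet d = Beta (1/2) ((real d - 1) / 2)"
definition Mp :: "nat \<Rightarrow> nat \<Rightarrow> real" where
  "Mp d n = Beta ((real n + 1) / 2) ((real d - 1) / 2) / (2 * bet d)"
definition mf :: "nat \<Rightarrow> nat \<Rightarrow> real" where "mf d n = (1 + (-1)^n) * Mp d n"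
abbreviation "Lp d \<equiv> lin (mf d)"
abbreviation "Lh d \<equiv> lin (Mp d)"
abbreviation "XX \<equiv> [:0, 1::real:]"
abbreviation "QQ \<equiv> [:1, 0, -1::real:]"

lemma Beta_pos: "a > 0 \<Longrightarrow> b > 0 \<Longrightarrow> Beta a (b::real) > 0"
  unfolding Beta_def by simp

lemma not_npi: "(x::real) > 0 \<Longrightarrow> x \<notin> \<int>\<^sub>\<le>\<^sub>0" by auto

lemma XX_mult: "XX * p = pCons 0 p"
  by simp

lemma XX_monom: "XX * monom a n = monom a (Suc n)"
  by (simp add: monom_Suc)

lemma lin_XX: "lin c XX = c 1"
  using lin_monom[of c 1 1] by (simp add: monom_Suc monom_0 one_pCons)

lemma QQ_monom: "QQ * monom a n = monom a n - monom a (n+2)"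
proof -
  have "QQ = monom 1 0 - monom 1 2"
    by (auto simp: poly_eq_iff coeff_pCons coeff_monom numeral_2_eq_2 split: nat.split)
  then show ?thesis by (simp add: algebra_simps mult_monom monom_Suc)
qed

locale geg = fixes d :: nat assumes d2: "2 \<le> d"
begin

lemma bet_pos: "bet d > 0"
  unfolding bet_def using d2 by (intro Beta_pos) auto

lemma Mp0: "Mp d 0 = 1/2"
  using bet_pos by (simp add: Mp_def bet_def)

lemma Mp1: "Mp d 1 = 1 / ((real d - 1) * bet d)"
proof -
  have b: "(real d - 1) / 2 > 0" using d2 by auto
  have g: "Gamma ((real d - 1) / 2 + 1) = (real d - 1) / 2 * Gamma ((real d - 1) / 2)"
    using Gamma_plus1[OF not_npi[OF b]] .
  have gp: "Gamma ((real d - 1) / 2) > 0" using b by simp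
  have "Beta 1 ((real d - 1) / 2) = Gamma ((real d - 1) / 2) / Gamma ((real d - 1) / 2 + 1)"
    unfolding Beta_def by (simp add: add.commute)
  also have "\<dots> = 1 / ((real d - 1) / 2)" unfolding g
    by (rule nonzero_divide_mult_cancel_right) (use gp in auto)
  also have "\<dots> = 2 / (real d - 1)" by simp
  finally have B1: "Beta 1 ((real d - 1) / 2) = 2 / (real d - 1)" .
  have "Mp d 1 = Beta 1 ((real d - 1) / 2) / (2 * bet d)" by (simp add: Mp_def)
  also have "\<dots> = (2 / (real d - 1)) / (2 * bet d)" unfolding B1 ..
  also have "\<dots> = 1 / ((real d - 1) * bet d)" by simp
  finally show ?thesis .
qed

lemma Mp_rec: "(real n + real d) * Mp d (n+2) = (real n + 1) * Mp d n"
proof -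
  have x: "(real n + 1) / 2 > 0" by auto
  have "((real n + 1) / 2 + (real d - 1) / 2) * Beta ((real n + 1) / 2 + 1) ((real d - 1) / 2)
        = (real n + 1) / 2 * Beta ((real n + 1) / 2) ((real d - 1) / 2)"
    by (rule Beta_plus1_left[OF not_npi[OF x]])
  moreover have "(real n + 1) / 2 + 1 = (real (n+2) + 1) / 2" by simp
  ultimately show ?thesis unfolding Mp_def using bet_pos
    by (simp add: field_simps)
qed

lemma mf_rec: "(real n + real d) * mf d (n+2) = (real n + 1) * mf d n"
  using Mp_rec[of n] by (simp add: mf_def)

lemma pearson: "Lp d (QQ * pderiv p) = (real d - 1) * Lp d (XX * p)"
proof (rule linear_poly_eq[where F = "\<lambda>p. Lp d (QQ * pderiv p)"])
  fix n :: nat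
  show "Lp d (QQ * pderiv (monom 1 n)) = (real d - 1) * Lp d (XX * monom 1 n)"
  proof (cases n)
    case 0
    then show ?thesis by (simp add: pderiv_monom lin_XX mf_def)
  next
    case (Suc k)
    have "pderiv (monom 1 n) = monom (real n) k" by (simp add: pderiv_monom Suc)
    then have e: "QQ * pderiv (monom 1 n) = monom (real n) k - monom (real n) (k+2)"
      by (simp only: QQ_monom)
    have e2: "XX * monom 1 n = monom 1 (k+2)" unfolding XX_monom Suc by simp
    show ?thesis unfolding e e2 lin_diff lin_monom using mf_rec[of k] Suc
      by (simp add: algebra_simps)
  qed
qed (simp_all only: pderiv_add pderiv_smult distrib_left mult_smult_right lin_add lin_smult, simp_all add: algebra_simps)

lemma half_pearson: "Lh d (QQ * pderiv p) = (real d - 1) * Lh d (XX * p) - poly p 0 / bet d"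
proof (rule linear_poly_eq[where F = "\<lambda>p. Lh d (QQ * pderiv p)"])
  fix n :: nat
  show "Lh d (QQ * pderiv (monom 1 n)) = (real d - 1) * Lh d (XX * monom 1 n) - poly (monom 1 n) 0 / bet d"
  proof (cases n)
    case 0
    then show ?thesis using d2 bet_pos by (simp add: pderiv_monom lin_XX Mp1[unfolded One_nat_def] poly_monom)
  next
    case (Suc k)
    have "pderiv (monom 1 n) = monom (real n) k" by (simp add: pderiv_monom Suc)
    then have e: "QQ * pderiv (monom 1 n) = monom (real n) k - monom (real n) (k+2)"
      by (simp only: QQ_monom)
    have e2: "XX * monom 1 n = monom 1 (k+2)" unfolding XX_monom Suc by simp
    show ?thesis unfolding e e2 lin_diff lin_monom using Mp_rec[of k] Suc
      by (simp add: algebra_simps poly_monom)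
  qed
qed (simp_all only: pderiv_add pderiv_smult distrib_left mult_smult_right lin_add lin_smult poly_add poly_smult, simp_all add: algebra_simps diff_divide_distrib add_divide_distrib)

end

definition xp :: "real poly" where "xp = [:0, 1:]"
definition qp :: "real poly" where "qp = 1 - xp * xp"

lemma QQ_qp: "QQ = qp"
  by (subst poly_eq_poly_eq_iff[symmetric]) (auto simp: qp_def xp_def algebra_simps)

lemma xp_monom: "xp = monom 1 1"
  by (simp add: xp_def monom_Suc monom_0 one_pCons)

lemma poly_xp[simp]: "poly xp x = x" by (simp add: xp_def)
lemma poly_qp[simp]: "poly qp x = 1 - x * x" by (simp add: qp_def)
lemma pderiv_xp[simp]: "pderiv xp = 1" by (simp add: xp_def pderiv_pCons)
lemma degree_xp[simp]: "degree xp = 1" by (simp add: xp_def)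

fun lc :: "nat \<Rightarrow> nat \<Rightarrow> real" where
  "lc d 0 = 1"
| "lc d (Suc 0) = 1"
| "lc d (Suc (Suc n)) = (real d + 2 * real n) / (real d + real n - 1) * lc d (Suc n)"

lemma two_step_induct:
  assumes "P 0" "P 1" "\<And>n. P n \<Longrightarrow> P (Suc n) \<Longrightarrow> P (Suc (Suc n))"
  shows "P (n::nat)"
proof -
  have "P n \<and> P (Suc n)" by (induction n) (use assms in auto)
  then show ?thesis by simp
qed

context geg begin

lemma Gp_rec: "Gp d (Suc (Suc n)) = smult ((real d + 2 * real n) / (real d + real n - 1)) (xp * Gp d (Suc n))
      - smult ((real n + 1) / (real d + real n - 1)) (Gp d n)"
  by (simp add: Let_def xp_def algebra_simps)

lemma Gp0: "Gp d 0 = 1" by simp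
lemma Gp1: "Gp d 1 = xp" by (simp add: xp_def)
lemma Gp1': "Gp d (Suc 0) = xp" by (simp add: xp_def)

lemma dpos: "real d + real n - 1 > 0" using d2 by linarith

lemma lc_pos: "lc d n > 0"
proof (induction n rule: two_step_induct)
  case (3 n)
  then show ?case using dpos[of n] d2 by simp
qed auto

lemma Gp_deg: "degree (Gp d n) \<le> n \<and> coeff (Gp d n) n = lc d n"
proof (induction n rule: two_step_induct)
  case 1
  then show ?case by (simp add: xp_def)
next
  case (3 n)
  have dx: "degree (xp * Gp d (Suc n)) \<le> Suc (Suc n)"
    using 3 degree_mult_le[of xp "Gp d (Suc n)"] by simp
  have d1: "degree (Gp d (Suc (Suc n))) \<le> Suc (Suc n)" unfolding Gp_rec
    using 3 dx by (intro degree_diff_le degree_smult_le[THEN order.trans]) auto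
  have c0: "coeff (Gp d n) (Suc (Suc n)) = 0" using 3 by (intro coeff_eq_0) auto
  have "coeff (Gp d (Suc (Suc n))) (Suc (Suc n)) = lc d (Suc (Suc n))"
    unfolding Gp_rec using 3 c0 by (simp add: xp_def)
  then show ?case using d1 by simp
qed simp

lemma Gp_degree: "degree (Gp d n) \<le> n" using Gp_deg by simp
lemma Gp_coeff: "coeff (Gp d n) n = lc d n" using Gp_deg by simp

lemma poly_Gp_rec: "poly (Gp d (Suc (Suc n))) x = (real d + 2 * real n) / (real d + real n - 1) * x * poly (Gp d (Suc n)) x
      - (real n + 1) / (real d + real n - 1) * poly (Gp d n) x"
  unfolding Gp_rec by simp

lemma poly_pderiv_Gp_rec: "poly (pderiv (Gp d (Suc (Suc n)))) x =
   (real d + 2 * real n) / (real d + real n - 1) * (poly (Gp d (Suc n)) x + x * poly (pderiv (Gp d (Suc n))) x)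
      - (real n + 1) / (real d + real n - 1) * poly (pderiv (Gp d n)) x"
  unfolding Gp_rec by (simp add: pderiv_diff pderiv_smult pderiv_mult algebra_simps)

lemma Dstep:
  fixes n :: nat and x P0 P1 P2 D0 D1 D2 :: real
  assumes n: "n \<ge> 1"
    and H0: "(1 - x*x) * D1 = real n * (P0 - x * P1)"
    and H1: "(1 - x*x) * D2 = (real n + 1) * (P1 - x * P2)"
    and R1: "P2 = (real d + 2 * real n - 2) / (real d + real n - 2) * x * P1 - real n / (real d + real n - 2) * P0"
  shows "(1 - x*x) * ((real d + 2 * real n) / (real d + real n - 1) * (P2 + x * D2) - (real n + 1) / (real d + real n - 1) * D1)
     = (real n + 2) * (P2 - x * ((real d + 2 * real n) / (real d + real n - 1) * x * P2 - (real n + 1) / (real d + real n - 1) * P1))"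
proof -
  have p1: "real d + real n - 1 > 0" and p2: "real d + real n - 2 > 0" using d2 n by linarith+
  have nz: "real n > 0" using n by simp
  define k where "k = real d + real n - 2"
  have k: "k > 0" using p2 k_def by simp
  have R1': "P2 = (real d + 2 * real n - 2) / k * x * P1 - real n / k * P0" using R1 k_def by simp
  have "k * P2 = (real d + 2 * real n - 2) * x * P1 - real n * P0"
    unfolding R1' using k by (simp add: field_simps)
  then have e1: "(real d + real n - 2) * P2 = (real d + 2 * real n - 2) * x * P1 - real n * P0"
    unfolding k_def .
  have nP0: "real n * P0 = (real d + 2 * real n - 2) * x * P1 - (real d + real n - 2) * P2"
    using e1 by linarith
  define c where "c = real d + real n - 1"
  have c: "c > 0" using p1 c_def by simp
  have "(1 - x*x) * ((real d + 2 * real n) / c * (P2 + x * D2) - (real n + 1) / c * D1)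
     = ((real d + 2 * real n) * (1 - x*x) * P2 + (real d + 2 * real n) * x * ((1 - x*x) * D2) - (real n + 1) * ((1 - x*x) * D1)) / c"
    using c by (simp add: field_simps)
  also have "\<dots> = ((real d + 2 * real n) * (1 - x*x) * P2 + (real d + 2 * real n) * x * ((real n + 1) * (P1 - x * P2))
        - (real n + 1) * (real n * P0 - real n * x * P1)) / c"
    unfolding H0 H1 by (simp add: algebra_simps)
  also have "\<dots> = ((real d + 2 * real n) * (1 - x*x) * P2 + (real d + 2 * real n) * x * ((real n + 1) * (P1 - x * P2))
        - (real n + 1) * (((real d + 2 * real n - 2) * x * P1 - (real d + real n - 2) * P2) - real n * x * P1)) / c"
    unfolding nP0 ..
  also have "\<dots> = (real n + 2) * (c * P2 - x * ((real d + 2 * real n) * x * P2 - (real n + 1) * P1)) / c"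
    unfolding c_def by (rule arg_cong[where f="\<lambda>t. t / _"]) (simp add: algebra_simps)
  also have "\<dots> = (real n + 2) * (P2 - x * ((real d + 2 * real n) / c * x * P2 - (real n + 1) / c * P1))"
    using c by (simp add: field_simps)
  finally show ?thesis unfolding c_def .
qed

lemma Dpoint: "n \<ge> 1 \<Longrightarrow> (1 - x*x) * poly (pderiv (Gp d n)) x = real n * (poly (Gp d (n - 1)) x - x * poly (Gp d n) x)"
proof (induction n rule: two_step_induct)
  case 2
  then show ?case by (simp add: Gp1' Gp0 algebra_simps del: Gp.simps)
next
  case (3 n)
  show ?case
  proof (cases "n = 0")
    case True
    define e where "e = real d - 1"
    have e: "e > 0" "real d = e + 1" using d2 e_def by auto
    have g2: "poly (Gp d 2) x = ((e+1)*x*x - 1)/e"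
      using poly_Gp_rec[of 0 x] e by (simp add: numeral_2_eq_2 xp_def field_simps)
    have g2': "poly (pderiv (Gp d 2)) x = 2*(e+1)*x/e"
      using poly_pderiv_Gp_rec[of 0 x] e by (simp add: numeral_2_eq_2 xp_def pderiv_pCons field_simps)
    have "(1 - x*x) * (2*(e+1)*x/e) = 2 * (x - x * (((e+1)*x*x - 1)/e))"
      using e by (simp add: field_simps)
    then show ?thesis using True g2 g2' by (simp add: numeral_2_eq_2 xp_def)
  next
    case False
    then obtain m where m: "n = Suc m" by (cases n) auto
    have H0: "(1 - x*x) * poly (pderiv (Gp d n)) x = real n * (poly (Gp d m) x - x * poly (Gp d n) x)"
      using 3(1) False m by simp
    have H1: "(1 - x*x) * poly (pderiv (Gp d (Suc n))) x = (real n + 1) * (poly (Gp d n) x - x * poly (Gp d (Suc n)) x)"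
      using 3(2) by simp
    have R1: "poly (Gp d (Suc n)) x = (real d + 2 * real n - 2) / (real d + real n - 2) * x * poly (Gp d n) x - real n / (real d + real n - 2) * poly (Gp d m) x"
      unfolding m poly_Gp_rec by (simp add: algebra_simps)
    show ?thesis unfolding poly_pderiv_Gp_rec
      using Dstep[OF _ H0 H1 R1] False by (simp add: poly_Gp_rec[of n]) (simp add: algebra_simps)
  qed
qed simp

lemma Dpoly: assumes "n \<ge> 1" shows "qp * pderiv (Gp d n) = smult (real n) (Gp d (n - 1) - xp * Gp d n)"
proof -
  have "poly (qp * pderiv (Gp d n)) = poly (smult (real n) (Gp d (n - 1) - xp * Gp d n))"
    using Dpoint[OF assms] by (auto simp: fun_eq_iff)
  then show ?thesis using poly_eq_poly_eq_iff by blast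
qed

end

declare Gp.simps(3)[simp del]

lemma xp_pow: "xp ^ j = monom 1 j"
  by (induction j) (simp_all add: monom_0 one_pCons XX_monom[symmetric] xp_def)

lemma lin_xpow: "lin c (xp ^ j) = c j"
  by (simp add: xp_pow lin_monom)

lemma monom_xp: "monom a i = smult a (xp ^ i)"
  by (simp add: xp_pow smult_monom)

lemma deg_lt: "degree (p::real poly) \<le> n \<Longrightarrow> coeff p n = 0 \<Longrightarrow> 0 < n \<Longrightarrow> degree p < n"
  by (metis le_neq_implies_less leading_coeff_0_iff degree_0)

lemma deg_le_pred: "degree (p::real poly) \<le> Suc n \<Longrightarrow> coeff p (Suc n) = 0 \<Longrightarrow> degree p \<le> n"
  by (metis le_SucE leading_coeff_0_iff degree_0 le0)

context geg begin

lemma pearson': "Lp d (qp * pderiv p) = (real d - 1) * Lp d (xp * p)"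
  using pearson[of p] unfolding QQ_qp xp_def .

lemma half_pearson': "Lh d (qp * pderiv p) = (real d - 1) * Lh d (xp * p) - poly p 0 / bet d"
  using half_pearson[of p] unfolding QQ_qp xp_def .

lemma star:
  assumes n: "n \<ge> 1"
  shows "(real n + real d - 1) * Lp d (Gp d n * (xp * r)) - Lp d (Gp d n * (qp * pderiv r))
       = real n * Lp d (Gp d (n - 1) * r)"
proof -
  have "qp * pderiv (Gp d n * r) = Gp d n * (qp * pderiv r) + r * (qp * pderiv (Gp d n))"
    by (simp add: pderiv_mult algebra_simps)
  also have "\<dots> = Gp d n * (qp * pderiv r) + smult (real n) (Gp d (n - 1) * r) - smult (real n) (Gp d n * (xp * r))"
    unfolding Dpoly[OF n] by (simp add: algebra_simps smult_diff_right)
  finally have e: "qp * pderiv (Gp d n * r) = Gp d n * (qp * pderiv r) + smult (real n) (Gp d (n - 1) * r) - smult (real n) (Gp d n * (xp * r))" .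
  have "Lp d (qp * pderiv (Gp d n * r)) = (real d - 1) * Lp d (xp * (Gp d n * r))"
    by (rule pearson')
  then have "Lp d (Gp d n * (qp * pderiv r)) + real n * Lp d (Gp d (n - 1) * r) - real n * Lp d (Gp d n * (xp * r))
      = (real d - 1) * Lp d (Gp d n * (xp * r))"
    unfolding e by (simp add: lin_add lin_diff lin_smult mult_ac)
  then show ?thesis by (simp add: algebra_simps)
qed

lemma star0: "n \<ge> 1 \<Longrightarrow> (real n + real d - 1) * Lp d (Gp d n * xp) = real n * Lp d (Gp d (n - 1))"
  using star[of n 1] by simp

lemma star_mon: "n \<ge> 1 \<Longrightarrow> (real n + real d + real i) * Lp d (Gp d n * xp ^ (i + 2)) - (real i + 1) * Lp d (Gp d n * xp ^ i)
     = real n * Lp d (Gp d (n - 1) * xp ^ (i + 1))"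
proof -
  assume n: "n \<ge> 1"
  have pd: "pderiv (xp ^ (i + 1)) = smult (real i + 1) (xp ^ i)"
    using pderiv_power_Suc[of xp i] by (simp add: add.commute)
  have "qp * pderiv (xp ^ (i + 1)) = smult (real i + 1) (xp ^ i) - smult (real i + 1) (xp ^ (i + 2))"
    unfolding pd qp_def by (simp add: algebra_simps power2_eq_square numeral_2_eq_2 smult_diff_right)
  moreover have "xp * xp ^ (i + 1) = xp ^ (i + 2)" by simp
  ultimately have "(real n + real d - 1) * Lp d (Gp d n * xp ^ (i + 2)) - Lp d (Gp d n * (smult (real i + 1) (xp ^ i) - smult (real i + 1) (xp ^ (i + 2))))
       = real n * Lp d (Gp d (n - 1) * xp ^ (i + 1))"
    using star[OF n, of "xp ^ (i + 1)"] by simp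
  then show ?thesis by (simp add: algebra_simps lin_diff lin_smult)
qed

lemma Mp2: "Mp d 2 = 1 / (2 * real d)"
  using Mp_rec[of 0] Mp0 d2 by (simp add: field_simps numeral_2_eq_2)

lemma mf0: "mf d 0 = 1" by (simp add: mf_def Mp0)
lemma mf1: "mf d 1 = 0" by (simp add: mf_def)
lemma mf2: "mf d 2 = 1 / real d" by (simp add: mf_def Mp2)

lemma L_G2: "Lp d (Gp d 2) = 0"
proof -
  have g: "Gp d 2 = smult (real d / (real d - 1)) (xp ^ 2) - smult (1 / (real d - 1)) (Gp d 0)"
    using Gp_rec[of 0] by (simp add: numeral_2_eq_2 Gp1' power2_eq_square del: Gp.simps)
  have "Lp d (Gp d 2) = real d / (real d - 1) * mf d 2 - 1 / (real d - 1) * mf d 0"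
    unfolding g lin_diff lin_smult Gp0 lin_xpow lin_1 ..
  also have "\<dots> = 0" using d2 by (simp add: mf0 mf2)
  finally show ?thesis .
qed

lemma orth_mon: "n \<ge> 1 \<Longrightarrow> j < n \<Longrightarrow> Lp d (Gp d n * xp ^ j) = 0"
proof (induction n arbitrary: j rule: less_induct)
  case (less n)
  have IH: "\<And>m j. m < n \<Longrightarrow> 1 \<le> m \<Longrightarrow> j < m \<Longrightarrow> Lp d (Gp d m * xp ^ j) = 0" using less.IH by blast
  have A0: "Lp d (Gp d n) = 0"
  proof -
    consider "n = 1" | "n = 2" | m where "n = Suc (Suc m)" "m \<ge> 1"
      using less.prems by (metis One_nat_def Suc_le_D le_SucE not_less_eq_eq numeral_2_eq_2)
    then show ?thesis
    proof cases
      case 1 then show ?thesis using lin_xpow[of "mf d" 1] by (simp add: Gp1' mf_def del: Gp.simps)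
    next
      case 2 then show ?thesis by (simp add: L_G2)
    next
      case 3
      have "Lp d (Gp d n) = (real d + 2 * real m) / (real d + real m - 1) * Lp d (Gp d (Suc m) * xp)
              - (real m + 1) / (real d + real m - 1) * Lp d (Gp d m * xp ^ 0)"
        unfolding 3(1) Gp_rec by (simp add: lin_diff lin_smult mult.commute)
      also have "\<dots> = 0" using IH[of "Suc m" 1] IH[of m 0] 3 by simp
      finally show ?thesis .
    qed
  qed
  show ?case using less.prems
  proof (induction j rule: less_induct)
    case (less j)
    show ?case
    proof (cases j)
      case 0 then show ?thesis using A0 by simp
    next
      case (Suc j1)
      show ?thesis
      proof (cases j1)
        case 0
        have "(real n + real d - 1) * Lp d (Gp d n * xp) = 0"
          using star0[of n] IH[of "n - 1" 0] less.prems Suc 0 by simp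
        moreover have "real n + real d - 1 > 0" using d2 by simp
        ultimately show ?thesis using Suc 0 by simp
      next
        case (Suc i)
        have "(real n + real d + real i) * Lp d (Gp d n * xp ^ (i + 2)) - (real i + 1) * Lp d (Gp d n * xp ^ i)
             = real n * Lp d (Gp d (n - 1) * xp ^ (i + 1))"
          using star_mon[of n i] less.prems by simp
        moreover have "Lp d (Gp d n * xp ^ i) = 0" using less.IH[of i] less.prems \<open>j = Suc j1\<close> Suc by simp
        moreover have "Lp d (Gp d (n - 1) * xp ^ (i + 1)) = 0"
          using IH[of "n - 1" "i + 1"] less.prems \<open>j = Suc j1\<close> Suc by simp
        moreover have "real n + real d + real i > 0" using d2 by simp
        ultimately show ?thesis using \<open>j = Suc j1\<close> Suc by simp
      qed
    qed
  qed
qed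

lemma poly_xp_sum: "q = (\<Sum>i\<le>degree q. smult (coeff q i) (xp ^ i))"
  using poly_as_sum_of_monoms[of q] by (simp add: monom_xp)

lemma orth: "degree q < n \<Longrightarrow> Lp d (Gp d n * q) = 0"
proof -
  assume q: "degree q < n"
  have "Lp d (Gp d n * q) = Lp d (\<Sum>i\<le>degree q. smult (coeff q i) (Gp d n * xp ^ i))"
    by (subst poly_xp_sum) (simp add: sum_distrib_left mult_smult_right)
  also have "\<dots> = 0" unfolding lin_sum lin_smult using q by (simp add: orth_mon)
  finally show ?thesis .
qed

lemma orth_pair: "i \<noteq> j \<Longrightarrow> Lp d (Gp d i * Gp d j) = 0"
proof -
  assume "i \<noteq> j"
  then consider "i < j" | "j < i" by linarith
  then show ?thesis
  proof cases
    case 1 then show ?thesis using orth[of "Gp d i" j] Gp_degree[of i] by (simp add: mult.commute)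
  next
    case 2 then show ?thesis using orth[of "Gp d j" i] Gp_degree[of j] by simp
  qed
qed

lemma erec: "n \<ge> 1 \<Longrightarrow> (2 * real n + real d - 2) * Lp d (Gp d n * xp ^ n) = real n * Lp d (Gp d (n - 1) * xp ^ (n - 1))"
proof -
  assume n: "n \<ge> 1"
  show ?thesis
  proof (cases "n = 1")
    case True then show ?thesis using star0[of 1] by simp
  next
    case False
    then obtain i where i: "n = i + 2" using n by (metis add_2_eq_Suc' le_iff_add plus_1_eq_Suc not_less_eq_eq less_one nat_le_iff_add One_nat_def le_SucE add.commute)
    have "(real n + real d + real i) * Lp d (Gp d n * xp ^ (i + 2)) - (real i + 1) * Lp d (Gp d n * xp ^ i)
             = real n * Lp d (Gp d (n - 1) * xp ^ (i + 1))" using star_mon[OF n] .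
    moreover have "Lp d (Gp d n * xp ^ i) = 0" using orth_mon[OF n, of i] i by simp
    ultimately show ?thesis using i by (simp add: algebra_simps)
  qed
qed

lemma norm_lc: "Lp d (Gp d n * Gp d n) = lc d n * Lp d (Gp d n * xp ^ n)"
proof (cases "n = 0")
  case True then show ?thesis by simp
next
  case False
  define R where "R = Gp d n - smult (lc d n) (xp ^ n)"
  have "degree (smult (lc d n) (xp ^ n)) \<le> n" by (simp add: xp_pow degree_monom_le)
  then have "degree R \<le> n" unfolding R_def using Gp_degree[of n] degree_diff_le by blast
  moreover have "coeff R n = 0" unfolding R_def by (simp add: Gp_coeff xp_pow)
  ultimately have "degree R < n" using False deg_lt by blast
  then have "Lp d (Gp d n * R) = 0" by (rule orth)
  moreover have "Gp d n = smult (lc d n) (xp ^ n) + R" unfolding R_def by simp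
  ultimately show ?thesis
    by (metis (no_types, lifting) add.right_neutral distrib_left lin_add lin_smult mult_smult_right)
qed

lemma Bdk_pos: "Bdk d n > 0"
  unfolding Bdk_def using d2 by (auto intro!: divide_pos_pos mult_pos_pos)

lemma Bdk_rec: "Bdk d (Suc (Suc n)) * (real n + 2) * (2 * real n + real d) = Bdk d (Suc n) * (real n + real d - 1) * (2 * real n + real d + 2)"
proof -
  define m where "m = Suc n + d - 3"
  have m2: "Suc (Suc n) + d - 3 = Suc m" unfolding m_def using d2 by simp
  have rm: "real (Suc m) = real n + real d - 1" unfolding m_def using d2 by simp
  have b2: "Bdk d (Suc (Suc n)) = fact (Suc m) * (2 * real (Suc (Suc n)) + real d - 2) / (fact (Suc (Suc n)) * fact (d - 2))"
    unfolding Bdk_def m2[symmetric] by simp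
  have b1: "Bdk d (Suc n) = fact m * (2 * real (Suc n) + real d - 2) / (fact (Suc n) * fact (d - 2))"
    unfolding Bdk_def m_def by simp
  have f1: "(fact (Suc m) :: real) = (real n + real d - 1) * fact m"
    using rm by (simp only: fact_Suc of_nat_mult)
  have f2: "(fact (Suc (Suc n)) :: real) = (real n + 2) * fact (Suc n)"
    by (simp only: fact_Suc of_nat_mult) (simp add: algebra_simps)
  define A where "A = (fact m :: real) / (fact (Suc n) * fact (d - 2))"
  have b1': "Bdk d (Suc n) = A * (2 * real n + real d)" unfolding b1 A_def by (simp add: algebra_simps)
  have b2': "Bdk d (Suc (Suc n)) = A * (real n + real d - 1) * (2 * real n + real d + 2) / (real n + 2)"
    unfolding b2 A_def f1 f2 by (simp add: algebra_simps del: fact_Suc)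
  show ?thesis unfolding b1' b2' by (simp add: field_simps)
qed

lemma Bstep_arith:
  fixes B1 B2 l1 l2 e1 e2 n dd :: real
  assumes "n \<ge> 0" "dd \<ge> 2" "B2 * (n + 2) * (2 * n + dd) = B1 * (n + dd - 1) * (2 * n + dd + 2)"
    "(2 * n + dd + 2) * e2 = (n + 2) * e1" "l2 * (dd + n - 1) = (dd + 2 * n) * l1" "B1 * l1 * e1 = 1"
  shows "B2 * l2 * e2 = 1"
proof -
  define K where "K = (n + 2) * (2 * n + dd) * (dd + n - 1) * (2 * n + dd + 2)"
  have K: "K \<noteq> 0" unfolding K_def using assms(1,2) by auto
  have "(B2 * l2 * e2) * K = (B2 * (n + 2) * (2 * n + dd)) * (l2 * (dd + n - 1)) * ((2 * n + dd + 2) * e2)"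
    unfolding K_def by (simp add: algebra_simps)
  also have "\<dots> = (B1 * l1 * e1) * K"
    unfolding assms(3,4,5) K_def by (simp add: algebra_simps)
  finally show ?thesis using K assms(6) by simp
qed

lemma Bnorm: "Bdk d n * Lp d (Gp d n * Gp d n) = 1"
proof -
  have "Bdk d n * lc d n * Lp d (Gp d n * xp ^ n) = 1"
  proof (induction n rule: two_step_induct)
    case 1 then show ?case by (simp add: Bdk_def lin_1 mf0)
  next
    case 2
    have "Bdk d 1 = real d" unfolding Bdk_def using d2 by (simp add: Suc_diff_le numeral_3_eq_3 numeral_2_eq_2)
    then show ?case using d2 by (simp add: Gp1' lin_xpow mf2 power2_eq_square[symmetric] del: Gp.simps)
  next
    case (3 n)
    have e: "(2 * real (Suc (Suc n)) + real d - 2) * Lp d (Gp d (Suc (Suc n)) * xp ^ Suc (Suc n)) = real (Suc (Suc n)) * Lp d (Gp d (Suc n) * xp ^ Suc n)"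
      using erec[of "Suc (Suc n)"] by simp
    have lcr: "lc d (Suc (Suc n)) * (real d + real n - 1) = (real d + 2 * real n) * lc d (Suc n)"
      using dpos[of n] by simp
    show ?case
      by (rule Bstep_arith[of "real n" "real d", OF _ _ _ _ lcr 3(2)]) (use d2 Bdk_rec[of n] e in \<open>simp_all add: algebra_simps\<close>)


  qed
  then show ?thesis by (simp add: norm_lc mult.assoc)
qed

lemma norm_G: "Lp d (Gp d n * Gp d n) = 1 / Bdk d n"
  using Bnorm[of n] Bdk_pos[of n] by (simp add: field_simps)

lemma span: "degree q \<le> n \<Longrightarrow> \<exists>\<alpha>. q = (\<Sum>l\<le>n. smult (\<alpha> l) (Gp d l))"
proof (induction n arbitrary: q)
  case 0
  then have "q = [:coeff q 0:]" by (metis degree_eq_zeroE le_zero_eq coeff_pCons_0)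
  then have "q = smult (coeff q 0) (Gp d 0)" by simp
  then show ?case by (intro exI[of _ "\<lambda>_. coeff q 0"]) simp
next
  case (Suc n)
  define c where "c = coeff q (Suc n) / lc d (Suc n)"
  define q' where "q' = q - smult c (Gp d (Suc n))"
  have "degree (smult c (Gp d (Suc n))) \<le> Suc n" using Gp_degree[of "Suc n"] by simp
  then have "degree q' \<le> Suc n" unfolding q'_def using Suc.prems degree_diff_le by blast
  moreover have "coeff q' (Suc n) = 0" unfolding q'_def c_def using lc_pos[of "Suc n"] by (simp add: Gp_coeff)
  ultimately have "degree q' \<le> n" by (rule deg_le_pred)
  then obtain \<alpha> where a: "q' = (\<Sum>l\<le>n. smult (\<alpha> l) (Gp d l))" using Suc.IH by blast
  have "q = (\<Sum>l\<le>Suc n. smult ((\<alpha>(Suc n := c)) l) (Gp d l))"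
    using a unfolding q'_def by (simp add: algebra_simps)
  then show ?case by blast
qed

end

definition PP :: "nat \<Rightarrow> nat \<Rightarrow> real" where "PP d k = (\<Prod>j\<in>{0..<k}. real d + 2 * real j - 1)"

lemma PP_Suc: "PP d (Suc k) = PP d k * (real d + 2 * real k - 1)"
  by (simp add: PP_def)

lemma dfact_odd: "dfact (2 * int k + 1) = (2 * real k + 1) * dfact (2 * int k - 1)"
  by (subst dfact.simps) (simp add: algebra_simps)

lemma dfact_m1: "dfact (-1) = 1" by (subst dfact.simps) simp

lemma solve_mul: "(c::real) \<noteq> 0 \<Longrightarrow> c * a = b \<Longrightarrow> a = b / c"
  by (simp add: field_simps)

context geg begin

lemma PP_pos: "PP d k > 0"
  unfolding PP_def using d2 by (intro prod_pos) auto

definition AA :: "nat \<Rightarrow> real" where "AA n = Lh d (xp * Gp d n)"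
definition UU :: "nat \<Rightarrow> real" where "UU n = Lh d (Gp d n)"
definition gg :: "nat \<Rightarrow> real" where "gg n = poly (Gp d n) 0"

lemma RA: "n \<ge> 1 \<Longrightarrow> (real n + real d - 1) * AA n = real n * UU (n - 1) + gg n / bet d"
proof -
  assume n: "n \<ge> 1"
  have "Lh d (qp * pderiv (Gp d n)) = (real d - 1) * AA n - gg n / bet d"
    unfolding AA_def gg_def by (rule half_pearson')
  moreover have "Lh d (qp * pderiv (Gp d n)) = real n * UU (n - 1) - real n * AA n"
    unfolding Dpoly[OF n] AA_def UU_def by (simp add: lin_diff lin_smult algebra_simps)
  ultimately show ?thesis by (simp add: algebra_simps)
qed

lemma RU: "UU (Suc (Suc n)) = (real d + 2 * real n) / (real d + real n - 1) * AA (Suc n) - (real n + 1) / (real d + real n - 1) * UU n"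
  unfolding UU_def AA_def Gp_rec by (simp add: lin_diff lin_smult)

lemma gg_rec: "gg (Suc (Suc n)) = - (real n + 1) / (real d + real n - 1) * gg n"
  unfolding gg_def Gp_rec using dpos[of n] by (simp add: field_simps)

lemma gg0: "gg 0 = 1" by (simp add: gg_def)
lemma gg1: "gg (Suc 0) = 0" by (simp add: gg_def)

lemma Mp1s: "Mp d (Suc 0) = 1 / ((real d - 1) * bet d)" using Mp1 by simp

lemma gg_odd: "gg (2 * k + 1) = 0"
  by (induction k) (simp_all add: gg1 gg_rec)

lemma gg_even: "gg (2 * k) = (-1) ^ k * dfact (2 * int k - 1) / PP d k"
proof (induction k)
  case 0 then show ?case by (simp add: gg0 PP_def dfact_m1)
next
  case (Suc k)
  have e: "2 * Suc k = Suc (Suc (2 * k))" by simp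
  have p: "real d + 2 * real k - 1 > 0" using d2 by simp
  have "gg (2 * Suc k) = - (2 * real k + 1) / (real d + 2 * real k - 1) * gg (2 * k)"
    unfolding e gg_rec by simp
  also have "\<dots> = (-1) ^ Suc k * dfact (2 * int (Suc k) - 1) / PP d (Suc k)"
    unfolding Suc PP_Suc using dfact_odd[of k] p PP_pos[of k] by (simp add: field_simps)
  finally show ?case .
qed

lemma AA0: "AA 0 = 1 / ((real d - 1) * bet d)"
  unfolding AA_def using lin_xpow[of "Mp d" 1] by (simp add: Mp1s)

lemma AA1: "AA 1 = 1 / (2 * real d)"
  unfolding AA_def using lin_xpow[of "Mp d" 2] by (simp add: Gp1' Mp2 power2_eq_square del: Gp.simps)

lemma UU0: "UU 0 = 1/2" unfolding UU_def by (simp add: lin_1 Mp0)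
lemma UU1: "UU 1 = 1 / ((real d - 1) * bet d)"
  unfolding UU_def using lin_xpow[of "Mp d" 1] by (simp add: Gp1' Mp1s del: Gp.simps)

lemma UA_even: "UU (2 * k + 1) = (-1) ^ k * dfact (2 * int k - 1) / (bet d * PP d (k + 1))
   \<and> AA (2 * k + 2) = (-1) ^ k * dfact (2 * int k - 1) / (bet d * PP d (k + 2))"
proof (induction k)
  case 0
  have U1: "UU 1 = (-1) ^ 0 * dfact (2 * int 0 - 1) / (bet d * PP d (0 + 1))"
    using UU1 by (simp add: PP_def dfact_m1 mult.commute)
  moreover have "AA 2 = (-1) ^ 0 * dfact (2 * int 0 - 1) / (bet d * PP d (0 + 2))"
  proof -
    have "(2 + real d - 1) * AA 2 = 2 * UU 1 + gg 2 / bet d" using RA[of 2] by simp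
    moreover have "gg 2 = - 1 / (real d - 1)" using gg_even[of 1] by (simp add: PP_def dfact_m1 dfact_odd[of 0, simplified])
    ultimately have h: "(real d + 1) * AA 2 = 1 / ((real d - 1) * bet d)" using UU1 bet_pos d2
      by (simp add: field_simps)
    have "AA 2 = (1 / ((real d - 1) * bet d)) / (real d + 1)" using h d2 bet_pos
      by (simp add: eq_divide_eq mult_ac)
    moreover have "PP d (Suc (Suc 0)) = (real d - 1) * (real d + 1)" by (simp add: PP_def)
    ultimately show ?thesis by (simp add: dfact_m1 mult_ac)
  qed
  ultimately show ?case by (simp add: numeral_2_eq_2)
next
  case (Suc k)
  define D where "D = dfact (2 * int k - 1)"
  define s where "s = ((-1) ^ k :: real)"
  have U: "UU (2 * k + 1) = s * D / (bet d * PP d (k + 1))"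
    and A: "AA (2 * k + 2) = s * D / (bet d * PP d (k + 2))" using Suc unfolding D_def s_def by auto
  have p: "real d + 2 * real k > 0" "real d + 2 * real k + 1 > 0" "bet d > 0" "PP d (k + 1) > 0"
    using d2 bet_pos PP_pos by auto
  have PP2: "PP d (k + 2) = PP d (k + 1) * (real d + 2 * real k + 1)"
    using PP_Suc[of d "Suc k"] by (simp add: algebra_simps)
  have PP3: "PP d (k + 3) = PP d (k + 2) * (real d + 2 * real k + 3)"
    using PP_Suc[of d "Suc (Suc k)"] by (simp add: algebra_simps numeral_3_eq_3)
  have DS: "dfact (2 * int (Suc k) - 1) = (2 * real k + 1) * D"
    unfolding D_def using dfact_odd[of k] by (simp add: algebra_simps)
  have U3: "UU (2 * Suc k + 1) = (-1) ^ Suc k * dfact (2 * int (Suc k) - 1) / (bet d * PP d (Suc k + 1))"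
  proof -
    define c where "c = real d + 2 * real k + 1"
    define e where "e = real d + 2 * real k"
    define X where "X = s * D / (bet d * PP d (k + 1))"
    have c: "c > 0" "e > 0" using p c_def e_def by auto
    have A': "AA (2 * k + 2) = X / c" unfolding A PP2 X_def c_def by simp
    have "UU (2 * Suc k + 1) = (e + 2 * real k + 2) / e * AA (2 * k + 2) - (2 * real k + 2) / e * UU (2 * k + 1)"
      using RU[of "2 * k + 1"] unfolding e_def by (simp add: numeral_2_eq_2 algebra_simps)
    also have "\<dots> = X * ((e + 2 * real k + 2) / (e * c) - (2 * real k + 2) / e)"
      unfolding A' U X_def[symmetric] using c by (simp add: field_simps)
    also have "(e + 2 * real k + 2) / (e * c) - (2 * real k + 2) / e = - (2 * real k + 1) / c"
    proof -
      have ce: "c = e + 1" unfolding c_def e_def by simp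
      have e0: "e \<noteq> 0" "e + 1 \<noteq> 0" using c by auto
      have "(2 * real k + 2) / e = (2 * real k + 2) * (e + 1) / (e * (e + 1))" using e0 by simp
      then have "(e + 2 * real k + 2) / (e * (e + 1)) - (2 * real k + 2) / e
          = ((e + 2 * real k + 2) - (2 * real k + 2) * (e + 1)) / (e * (e + 1))"
        by (simp add: diff_divide_distrib)
      also have "(e + 2 * real k + 2) - (2 * real k + 2) * (e + 1) = - (2 * real k + 1) * e"
        by (simp add: algebra_simps)
      also have "- (2 * real k + 1) * e / (e * (e + 1)) = - (2 * real k + 1) / (e + 1)"
        using e0 by simp
      finally show ?thesis unfolding ce .
    qed
    also have "X * (- (2 * real k + 1) / c) = (-1) ^ Suc k * dfact (2 * int (Suc k) - 1) / (bet d * PP d (Suc k + 1))"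
    proof -
      have P2c: "PP d (Suc (Suc k)) = PP d (Suc k) * c" using PP2 c_def by simp
      show ?thesis unfolding DS X_def s_def using P2c c bet_pos PP_pos[of "Suc k"] by (simp add: field_simps)
    qed
    finally show ?thesis .
  qed
  have A3: "AA (2 * Suc k + 2) = (-1) ^ Suc k * dfact (2 * int (Suc k) - 1) / (bet d * PP d (Suc k + 2))"
  proof -
    define Q where "Q = bet d * PP d (k + 2)"
    define Y where "Y = s * (2 * real k + 1) * D"
    have Q: "Q > 0" unfolding Q_def using bet_pos PP_pos by simp
    have "(real (2 * k + 4) + real d - 1) * AA (2 * k + 4) = real (2 * k + 4) * UU (2 * k + 4 - 1) + gg (2 * k + 4) / bet d"
      by (rule RA) simp
    moreover have "2 * k + 4 - 1 = 2 * Suc k + 1" by simp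
    ultimately have r: "(real (2 * k + 4) + real d - 1) * AA (2 * k + 4) = real (2 * k + 4) * UU (2 * Suc k + 1) + gg (2 * k + 4) / bet d"
      by metis
    have U': "UU (2 * Suc k + 1) = - Y / Q"
      unfolding U3 DS Y_def Q_def s_def by (simp add: algebra_simps)
    have G': "gg (2 * k + 4) / bet d = (2 * real k + 3) * Y / Q"
    proof -
      have h: "gg (2 * (k + 2)) = (-1) ^ (k + 2) * dfact (2 * int (k + 2) - 1) / PP d (k + 2)" by (rule gg_even)
      have "2 * (k + 2) = 2 * k + 4" by simp
      then have h2: "gg (2 * k + 4) = (-1) ^ (k + 2) * dfact (2 * int (k + 2) - 1) / PP d (k + 2)" using h by metis
      have "dfact (2 * int (k + 1) + 1) = (2 * real (k + 1) + 1) * dfact (2 * int (k + 1) - 1)" by (rule dfact_odd)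
      moreover have "2 * int (k + 1) + 1 = 2 * int (k + 2) - 1" by simp
      ultimately have "dfact (2 * int (k + 2) - 1) = (2 * real k + 3) * ((2 * real k + 1) * D)"
        using DS by simp
      then show ?thesis unfolding h2 s_def Y_def Q_def by (simp add: algebra_simps)
    qed
    have "(real d + 2 * real k + 3) * AA (2 * k + 4) = (2 * real k + 4) * (- Y / Q) + (2 * real k + 3) * Y / Q"
      using r unfolding U' G' by (simp add: algebra_simps)
    also have "\<dots> = - Y / Q" using Q by (simp add: field_simps)
    finally have hA: "(real d + 2 * real k + 3) * AA (2 * k + 4) = - Y / Q" .
    have cp: "real d + 2 * real k + 3 \<noteq> 0" using p by simp
    have "AA (2 * k + 4) = (- Y / Q) / (real d + 2 * real k + 3)"
      by (rule solve_mul[OF cp hA])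
    then have "AA (2 * k + 4) = - Y / (Q * (real d + 2 * real k + 3))"
      by simp
    moreover have "Q * (real d + 2 * real k + 3) = bet d * PP d (Suc k + 2)"
      unfolding Q_def using PP3 by (simp add: numeral_3_eq_3)
    moreover have idx: "2 * Suc k + 2 = 2 * k + 4" by simp
    ultimately show ?thesis unfolding idx DS Y_def s_def by (simp add: numeral_3_eq_3 mult.assoc)
  qed
  show ?case using U3 A3 by simp
qed

lemma UA_odd: "UU (2 * k + 2) = 0 \<and> AA (2 * k + 3) = 0"
proof (induction k)
  case 0
  have U2: "UU 2 = 0"
    using RU[of 0] AA1 UU0 d2 by (simp add: numeral_2_eq_2 field_simps)
  moreover have "AA 3 = 0"
  proof -
    have "(3 + real d - 1) * AA 3 = 3 * UU 2 + gg 3 / bet d" using RA[of 3] by simp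
    moreover have "gg 3 = 0" using gg_odd[of 1] by simp
    ultimately show ?thesis using U2 d2 by simp
  qed
  ultimately show ?case by (simp add: numeral_2_eq_2)
next
  case (Suc k)
  have U: "UU (2 * Suc k + 2) = 0"
    using RU[of "2 * k + 2"] Suc by (simp add: numeral_3_eq_3 add.commute)
  have "(real (2 * k + 5) + real d - 1) * AA (2 * k + 5) = real (2 * k + 5) * UU (2 * k + 5 - 1) + gg (2 * k + 5) / bet d"
    by (rule RA) simp
  moreover have "gg (2 * k + 5) = 0"
  proof -
    have "gg (2 * (k + 2) + 1) = 0" by (rule gg_odd)
    moreover have "2 * (k + 2) + 1 = 2 * k + 5" by simp
    ultimately show ?thesis by metis
  qed
  moreover have e1: "2 * Suc k + 2 = 2 * k + 4" and e2: "2 * Suc k + 2 = 4 + 2 * k" by simp_all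
  moreover have "UU (2 * k + 4) = 0" using U e1 by metis
  moreover have "UU (4 + 2 * k) = 0" using U e2 by metis
  ultimately have "AA (2 * k + 5) = 0" using d2 by simp
  then show ?case using U by (simp add: algebra_simps)
qed

end

lemma beta_half:
  fixes n :: nat and b :: real
  assumes b: "b > 0"
  shows "integrable lborel (\<lambda>x. indicator {0..1} x * (x ^ n * (1 - x\<^sup>2) powr (b - 1)))"
    and "(\<integral>x. indicator {0..1} x * (x ^ n * (1 - x\<^sup>2) powr (b - 1)) \<partial>lborel) = Beta ((real n + 1) / 2) b / 2"
proof -
  define a where "a = (real n + 1) / 2"
  have a: "a > 0" unfolding a_def by simp
  define f where "f u = u powr (a - 1) * (1 - u) powr (b - 1)" for u :: real
  have fi: "set_integrable lborel {0..1} f" unfolding f_def by (rule integrable_Beta[OF a b])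
  have fI: "(LINT u:{0..1}|lborel. f u) = Beta a b"
    using set_borel_integral_eq_integral(2)[OF fi] has_integral_Beta_real[OF a b]
    unfolding f_def by (simp add: integral_unique)
  have fi': "set_integrable lborel {(\<lambda>x::real. x\<^sup>2) 0..(\<lambda>x. x\<^sup>2) 1} f" using fi by simp
  have der: "\<And>x. x \<in> {0..1} \<Longrightarrow> ((\<lambda>x::real. x\<^sup>2) has_real_derivative 2 * x) (at x)"
    by (auto intro!: derivative_eq_intros)
  have cont: "continuous_on {0..1} (\<lambda>x::real. 2 * x)" by (intro continuous_intros)
  note S = integral_substitution[OF fi' der cont _ zero_le_one]
  have S1: "set_integrable lborel {0..1} (\<lambda>x. f (x\<^sup>2) * (2 * x))" using S(1) by simp
  have S2: "(LBINT x. f x * indicator {0..1} x) = (LBINT x. f (x\<^sup>2) * (2 * x) * indicator {0..1} x)"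
    using S(2) by simp
  have key: "f (x\<^sup>2) * (2 * x) = 2 * (x ^ n * (1 - x\<^sup>2) powr (b - 1))" if "x > 0" for x :: real
  proof -
    have x2: "x\<^sup>2 = x powr 2" using that powr_realpow[of x 2] by simp
    have e1: "(x\<^sup>2) powr (a - 1) = x powr (2 * (a - 1))" unfolding x2 powr_powr by simp
    have e2: "x powr (2 * (a - 1) + 1) = x powr (2 * (a - 1)) * x" using that by (simp only: powr_add powr_one_gt_zero_iff) simp
    have "(x\<^sup>2) powr (a - 1) * x = x powr (2 * (a - 1) + 1)" unfolding e1 e2 ..
    also have "2 * (a - 1) + 1 = real n" unfolding a_def by (simp add: field_simps)
    finally have "(x\<^sup>2) powr (a - 1) * x = x ^ n" using that by (simp add: powr_realpow)
    then show ?thesis unfolding f_def by (simp add: algebra_simps)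
  qed
  have ae: "AE x in lborel. indicator {0..1} x * (f (x\<^sup>2) * (2 * x)) = 2 * (indicator {0..1} x * (x ^ n * (1 - x\<^sup>2) powr (b - 1)))"
    using AE_lborel_singleton[of 0]
  proof eventually_elim
    case (elim x)
    then show ?case by (cases "x \<in> {0..1}") (auto simp: key)
  qed
  have m1: "(\<lambda>x. indicator {0..1} x * (f (x\<^sup>2) * (2 * x))) \<in> borel_measurable lborel"
    unfolding f_def by measurable
  have m2: "(\<lambda>x. 2 * (indicator {0..1} x * (x ^ n * (1 - x\<^sup>2) powr (b - 1)))) \<in> borel_measurable lborel"
    by measurable
  have i2: "integrable lborel (\<lambda>x. 2 * (indicator {0..1} x * (x ^ n * (1 - x\<^sup>2) powr (b - 1))))"
    using integrable_cong_AE[OF m1 m2 ae] S1 unfolding set_integrable_def by (simp add: mult.commute)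
  then show i: "integrable lborel (\<lambda>x. indicator {0..1} x * (x ^ n * (1 - x\<^sup>2) powr (b - 1)))"
    by simp
  have "2 * (\<integral>x. indicator {0..1} x * (x ^ n * (1 - x\<^sup>2) powr (b - 1)) \<partial>lborel)
      = (\<integral>x. indicator {0..1} x * (f (x\<^sup>2) * (2 * x)) \<partial>lborel)"
    using integral_cong_AE[OF m1 m2 ae] by simp
  also have "\<dots> = (LBINT x. f x * indicator {0..1} x)" using S2 by (simp add: mult.commute)
  also have "\<dots> = Beta a b" using fI unfolding set_lebesgue_integral_def by (simp add: mult.commute)
  finally show "(\<integral>x. indicator {0..1} x * (x ^ n * (1 - x\<^sup>2) powr (b - 1)) \<partial>lborel) = Beta ((real n + 1) / 2) b / 2"
    unfolding a_def by simp
qed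


definition ww :: "nat \<Rightarrow> real \<Rightarrow> real" where
  "ww d x = indicator {-1..1} x * (1 - x\<^sup>2) powr ((real d - 3) / 2) / Beta (1/2) ((real d - 1) / 2)"

definition vv :: "nat \<Rightarrow> nat \<Rightarrow> real \<Rightarrow> real" where
  "vv d n x = indicator {0..1} x * (x ^ n * (1 - x\<^sup>2) powr ((real d - 1) / 2 - 1)) / bet d"

lemma mu_ww: "mu d = density lborel (\<lambda>x. ennreal (ww d x))"
  unfolding mu_def ww_def ..

lemma ww_meas[measurable]: "ww d \<in> borel_measurable borel"
  unfolding ww_def by measurable

lemma vv_meas[measurable]: "vv d n \<in> borel_measurable borel"
  unfolding vv_def by measurable

lemma relu_meas[measurable]: "relu \<in> borel_measurable borel"
  unfolding relu_def by measurable

context geg begin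

lemma ww_nonneg: "ww d x \<ge> 0"
  unfolding ww_def using bet_pos unfolding bet_def by (auto simp: indicator_def)

lemma vv_int: "integrable lborel (vv d n)" "(\<integral>x. vv d n x \<partial>lborel) = Mp d n"
proof -
  have b: "(real d - 1) / 2 > 0" using d2 by simp
  note B = beta_half[OF b, of n]
  show "integrable lborel (vv d n)" unfolding vv_def using B(1) by simp
  have "(\<integral>x. vv d n x \<partial>lborel) = (\<integral>x. indicator {0..1} x * (x ^ n * (1 - x\<^sup>2) powr ((real d - 1) / 2 - 1)) \<partial>lborel) / bet d"
    unfolding vv_def by simp
  also have "\<dots> = (Beta ((real n + 1) / 2) ((real d - 1) / 2) / 2) / bet d" unfolding B(2) ..
  finally show "(\<integral>x. vv d n x \<partial>lborel) = Mp d n" unfolding Mp_def by simp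
qed

lemma ex: "(real d - 1) / 2 - 1 = (real d - 3) / 2" by (simp add: field_simps)

lemma int_mu:
  assumes [measurable]: "f \<in> borel_measurable borel"
  shows "integrable (mu d) f \<longleftrightarrow> integrable lborel (\<lambda>x. ww d x * f x)"
    and "integral\<^sup>L (mu d) f = (\<integral>x. ww d x * f x \<partial>lborel)"
  unfolding mu_ww
  by (subst integrable_density integral_density; (simp add: ww_nonneg)?)+

lemma ww_relu: "ww d x * (relu x * x ^ n) = vv d (Suc n) x"
  unfolding ww_def vv_def relu_def ex bet_def by (auto simp: indicator_def max_def)

lemma mom_relu: "integrable (mu d) (\<lambda>x. relu x * x ^ n)" "integral\<^sup>L (mu d) (\<lambda>x. relu x * x ^ n) = Mp d (Suc n)"
  using int_mu[of "\<lambda>x. relu x * x ^ n"] vv_int[of "Suc n"] by (simp_all add: ww_relu)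

lemma ww_mom: "x \<noteq> 0 \<Longrightarrow> ww d x * x ^ n = vv d n x + (-1) ^ n * vv d n (- x)"
  unfolding ww_def vv_def ex bet_def
  by (cases "x > 0") (auto simp: indicator_def power_minus[of x n] algebra_simps)

lemma mom: "integrable (mu d) (\<lambda>x. x ^ n)" "integral\<^sup>L (mu d) (\<lambda>x. x ^ n) = mf d n"
proof -
  have mx: "(\<lambda>x::real. x ^ n) \<in> borel_measurable borel" by measurable
  have i1: "integrable lborel (vv d n)" by (rule vv_int)
  have i2: "integrable lborel (\<lambda>x. vv d n (- x))"
    using lborel_integrable_real_affine[OF i1, of "-1" 0] by simp
  have I2: "(\<integral>x. vv d n (- x) \<partial>lborel) = Mp d n"
    using lborel_integral_real_affine[of "-1" "vv d n" 0] vv_int(2)[of n] by simp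
  have ae: "AE x in lborel. ww d x * x ^ n = vv d n x + (-1) ^ n * vv d n (- x)"
    using AE_lborel_singleton[of 0] by eventually_elim (rule ww_mom)
  have i3: "integrable lborel (\<lambda>x. vv d n x + (-1) ^ n * vv d n (- x))"
    using i1 i2 by simp
  show "integrable (mu d) (\<lambda>x. x ^ n)"
    unfolding int_mu(1)[of "\<lambda>x. x ^ n", OF mx]
    using integrable_cong_AE[of "\<lambda>x. ww d x * x ^ n" lborel "\<lambda>x. vv d n x + (-1) ^ n * vv d n (- x)"] ae i3
    by simp
  have "integral\<^sup>L (mu d) (\<lambda>x. x ^ n) = (\<integral>x. vv d n x + (-1) ^ n * vv d n (- x) \<partial>lborel)"
    unfolding int_mu(2)[of "\<lambda>x. x ^ n", OF mx]
    by (rule integral_cong_AE) (use ae in simp_all)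
  also have "\<dots> = Mp d n + (-1) ^ n * Mp d n" using i1 i2 I2 vv_int(2)[of n] by simp
  finally show "integral\<^sup>L (mu d) (\<lambda>x. x ^ n) = mf d n" by (simp add: mf_def algebra_simps)
qed

lemma int_poly: "integrable (mu d) (\<lambda>x. poly p x)" "integral\<^sup>L (mu d) (\<lambda>x. poly p x) = Lp d p"
proof -
  have e: "(\<lambda>x. poly p x) = (\<lambda>x. \<Sum>i\<le>degree p. coeff p i * x ^ i)" by (simp add: poly_altdef)
  show "integrable (mu d) (\<lambda>x. poly p x)" unfolding e using mom(1) by simp
  show "integral\<^sup>L (mu d) (\<lambda>x. poly p x) = Lp d p" unfolding e lin_def
    using mom by (simp add: integral_sum)
qed

lemma lin_xp: "lin c (xp * p) = (\<Sum>i\<le>degree p. coeff p i * c (Suc i))"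
proof -
  have "lin c (xp * p) = (\<Sum>i\<le>Suc (degree p). coeff (xp * p) i * c i)"
    by (rule lin_bound) (simp add: xp_def degree_pCons_le)
  also have "\<dots> = (\<Sum>i\<le>degree p. coeff p i * c (Suc i))"
    by (subst sum.atMost_Suc_shift) (simp add: xp_def)
  finally show ?thesis .
qed

lemma int_relu_poly: "integrable (mu d) (\<lambda>x. relu x * poly p x)" "integral\<^sup>L (mu d) (\<lambda>x. relu x * poly p x) = Lh d (xp * p)"
proof -
  have e: "(\<lambda>x. relu x * poly p x) = (\<lambda>x. \<Sum>i\<le>degree p. coeff p i * (relu x * x ^ i))"
    by (simp add: poly_altdef sum_distrib_left mult_ac)
  show "integrable (mu d) (\<lambda>x. relu x * poly p x)" unfolding e using mom_relu(1) by simp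
  show "integral\<^sup>L (mu d) (\<lambda>x. relu x * poly p x) = Lh d (xp * p)" unfolding e lin_xp
    using mom_relu by (simp add: integral_sum)
qed

end

context geg begin

definition EE :: "real poly \<Rightarrow> real" where
  "EE q = Mp d 2 - 2 * Lh d (xp * q) + Lp d (q * q)"

definition SS :: "nat \<Rightarrow> real poly" where
  "SS n = (\<Sum>l<n. smult (Bdk d l * AA l) (Gp d l))"

lemma relu_sq: "(relu x)\<^sup>2 = relu x * x ^ 1"
  by (simp add: relu_def max_def power2_eq_square)

lemma sq_int: "integrable (mu d) (\<lambda>x. (relu x - poly q x)\<^sup>2)"
    "integral\<^sup>L (mu d) (\<lambda>x. (relu x - poly q x)\<^sup>2) = EE q"
proof -
  have e: "(\<lambda>x. (relu x - poly q x)\<^sup>2) = (\<lambda>x. relu x * x ^ 1 - 2 * (relu x * poly q x) + poly (q * q) x)"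
    by (rule ext) (auto simp: relu_def max_def power2_eq_square algebra_simps)
  show "integrable (mu d) (\<lambda>x. (relu x - poly q x)\<^sup>2)"
    unfolding e using mom_relu(1)[of 1] int_relu_poly(1)[of q] int_poly(1)[of "q * q"] by simp
  show "integral\<^sup>L (mu d) (\<lambda>x. (relu x - poly q x)\<^sup>2) = EE q"
    unfolding e EE_def using mom_relu[of 1] int_relu_poly[of q] int_poly[of "q * q"]
    by (simp add: numeral_2_eq_2)
qed

lemma EE_nonneg: "EE q \<ge> 0"
  using sq_int(2)[of q] integral_nonneg_AE[of "\<lambda>x. (relu x - poly q x)\<^sup>2" "mu d"] by simp

lemma Lp_GG: "Lp d (Gp d l * Gp d j) = (if j = l then 1 / Bdk d l else 0)"
  using orth_pair[of l j] norm_G[of l] by auto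

lemma EE_alpha: "EE (\<Sum>l<n. smult (\<alpha> l) (Gp d l)) = Mp d 2 - 2 * (\<Sum>l<n. \<alpha> l * AA l) + (\<Sum>l<n. (\<alpha> l)\<^sup>2 / Bdk d l)"
proof -
  have h: "Lh d (xp * (\<Sum>l<n. smult (\<alpha> l) (Gp d l))) = (\<Sum>l<n. \<alpha> l * AA l)"
    by (simp add: sum_distrib_left mult_smult_right lin_sum lin_smult AA_def)
  have "Lp d ((\<Sum>l<n. smult (\<alpha> l) (Gp d l)) * (\<Sum>l<n. smult (\<alpha> l) (Gp d l)))
      = (\<Sum>l<n. \<Sum>j<n. \<alpha> l * \<alpha> j * Lp d (Gp d l * Gp d j))"
    by (simp add: sum_product lin_sum lin_smult mult_smult_right mult_smult_left mult_ac)
  also have "\<dots> = (\<Sum>l<n. \<Sum>j<n. if j = l then (\<alpha> l)\<^sup>2 / Bdk d l else 0)"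
    by (intro sum.cong refl) (simp add: Lp_GG power2_eq_square)
  also have "\<dots> = (\<Sum>l<n. (\<alpha> l)\<^sup>2 / Bdk d l)"
    by (simp add: sum.delta)
  finally show ?thesis unfolding EE_def h by simp
qed

lemma EE_SS: "EE (SS n) = Mp d 2 - (\<Sum>l<n. Bdk d l * (AA l)\<^sup>2)"
proof -
  have "EE (SS n) = Mp d 2 - 2 * (\<Sum>l<n. Bdk d l * AA l * AA l) + (\<Sum>l<n. (Bdk d l * AA l)\<^sup>2 / Bdk d l)"
    unfolding SS_def by (rule EE_alpha)
  also have "(\<Sum>l<n. (Bdk d l * AA l)\<^sup>2 / Bdk d l) = (\<Sum>l<n. Bdk d l * (AA l)\<^sup>2)"
    by (intro sum.cong refl) (use Bdk_pos in \<open>simp add: power2_eq_square\<close>)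
  also have "(\<Sum>l<n. Bdk d l * AA l * AA l) = (\<Sum>l<n. Bdk d l * (AA l)\<^sup>2)"
    by (simp add: power2_eq_square mult_ac)
  finally show ?thesis by simp
qed

lemma EE_SS_Suc: "EE (SS (Suc n)) = EE (SS n) - Bdk d n * (AA n)\<^sup>2"
  unfolding EE_SS by simp

lemma EE_SS_mono: "m \<le> n \<Longrightarrow> EE (SS n) \<le> EE (SS m)"
proof (induction n rule: dec_induct)
  case (step n)
  have "Bdk d n * (AA n)\<^sup>2 \<ge> 0" using Bdk_pos[of n] by simp
  then show ?case using EE_SS_Suc[of n] step by linarith
qed simp

lemma EE_min: "EE (SS n) \<le> EE (\<Sum>l<n. smult (\<alpha> l) (Gp d l))"
proof -
  have "EE (\<Sum>l<n. smult (\<alpha> l) (Gp d l)) - EE (SS n) = (\<Sum>l<n. (\<alpha> l - Bdk d l * AA l)\<^sup>2 / Bdk d l)"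
  proof -
    have "(\<alpha> l - Bdk d l * AA l)\<^sup>2 / Bdk d l = (\<alpha> l)\<^sup>2 / Bdk d l - 2 * (\<alpha> l * AA l) + Bdk d l * (AA l)\<^sup>2" for l
      using Bdk_pos[of l] by (simp add: field_simps power2_eq_square)
    then show ?thesis unfolding EE_alpha EE_SS
      by (simp add: sum.distrib sum_subtractf sum_distrib_left)
  qed
  also have "\<dots> \<ge> 0" using Bdk_pos by (intro sum_nonneg divide_nonneg_pos) auto
  finally show ?thesis by simp
qed

lemma AE_mu: "AE x in mu d. x \<in> {-1..1}"
proof -
  have "AE x in lborel. 0 < ennreal (ww d x) \<longrightarrow> x \<in> {-1..1}"
    by (rule AE_I2) (auto simp: ww_def indicator_def)
  then show ?thesis unfolding mu_ww by (subst AE_density) auto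
qed

lemma EE_bound:
  assumes "\<And>x. x \<in> {-1..1} \<Longrightarrow> \<bar>relu x - poly q x\<bar> \<le> e"
  shows "EE q \<le> e\<^sup>2"
proof -
  have "integral\<^sup>L (mu d) (\<lambda>x. (relu x - poly q x)\<^sup>2) \<le> integral\<^sup>L (mu d) (\<lambda>x. poly [:e\<^sup>2:] x)"
  proof (rule integral_mono_AE)
    show "integrable (mu d) (\<lambda>x. (relu x - poly q x)\<^sup>2)" by (rule sq_int)
    show "integrable (mu d) (\<lambda>x. poly [:e\<^sup>2:] x)" by (rule int_poly)
    show "AE x in mu d. (relu x - poly q x)\<^sup>2 \<le> poly [:e\<^sup>2:] x"
      using AE_mu
    proof eventually_elim
      case (elim x)
      then have "\<bar>relu x - poly q x\<bar> \<le> e" by (rule assms)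
      then have "\<bar>relu x - poly q x\<bar>\<^sup>2 \<le> e\<^sup>2" by (intro power_mono) auto
      then show ?case by simp
    qed
  qed
  moreover have "integral\<^sup>L (mu d) (\<lambda>x. poly [:e\<^sup>2:] x) = e\<^sup>2"
    using int_poly(2)[of "[:e\<^sup>2:]"] by (simp add: lin_def mf0)
  moreover have m1: "measure (mu d) (space (mu d)) = 1" using int_poly(2)[of 1] by (simp add: lin_1 mf0)
  ultimately show ?thesis using sq_int(2) by simp
qed

lemma relu_cont: "continuous_on {-1..1} relu"
  unfolding relu_def by (intro continuous_intros)

lemma EE_SS_lim: "(\<lambda>n. EE (SS n)) \<longlonglongrightarrow> 0"
proof (rule LIMSEQ_I)
  fix r :: real assume r: "r > 0"
  define e where "e = sqrt (r / 2)"
  have e: "e > 0" "e\<^sup>2 < r" unfolding e_def using r by auto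
  obtain g where g: "real_polynomial_function g" "\<And>x. x \<in> {-1..1} \<Longrightarrow> \<bar>relu x - g x\<bar> < e"
    using Stone_Weierstrass_real_polynomial_function[OF compact_Icc relu_cont e(1)] by blast
  obtain a N where gN: "g = (\<lambda>x. \<Sum>i\<le>N. a i * x ^ i)" using g(1) real_polynomial_function_iff_sum by blast
  define q where "q = (\<Sum>i\<le>N. monom (a i) i)"
  have pq: "poly q x = g x" for x unfolding q_def gN by (simp add: poly_sum poly_monom)
  have "EE q \<le> e\<^sup>2" by (rule EE_bound) (use g(2) pq in \<open>auto intro: less_imp_le\<close>)
  have dq: "degree q \<le> N" unfolding q_def by (intro degree_sum_le) (auto intro: order.trans[OF degree_monom_le])
  obtain \<alpha> where q: "q = (\<Sum>l\<le>N. smult (\<alpha> l) (Gp d l))" using span[OF dq] by blast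
  have "q = (\<Sum>l<Suc N. smult (\<alpha> l) (Gp d l))" unfolding q lessThan_Suc_atMost ..
  then have "EE (SS (Suc N)) \<le> EE q" using EE_min by metis
  show "\<exists>no. \<forall>n\<ge>no. norm (EE (SS n) - 0) < r"
  proof (intro exI allI impI)
    fix n assume "Suc N \<le> n"
    then have "EE (SS n) \<le> EE (SS (Suc N))" by (rule EE_SS_mono)
    then show "norm (EE (SS n) - 0) < r"
      using \<open>EE (SS (Suc N)) \<le> EE q\<close> \<open>EE q \<le> e\<^sup>2\<close> e EE_nonneg[of "SS n"] by simp
  qed
qed

end

lemma sqdiff_int:
  fixes f h :: "'a \<Rightarrow> real"
  assumes [measurable]: "f \<in> borel_measurable M" "h \<in> borel_measurable M"
    and "integrable M (\<lambda>x. (f x)\<^sup>2)" "integrable M (\<lambda>x. (h x)\<^sup>2)"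
  shows "integrable M (\<lambda>x. (f x - h x)\<^sup>2)"
proof (rule Bochner_Integration.integrable_bound[where f="\<lambda>x. 2 * (f x)\<^sup>2 + 2 * (h x)\<^sup>2"])
  show "integrable M (\<lambda>x. 2 * (f x)\<^sup>2 + 2 * (h x)\<^sup>2)" using assms(3,4) by simp
  show "(\<lambda>x. (f x - h x)\<^sup>2) \<in> borel_measurable M" by measurable
  show "AE x in M. norm ((f x - h x)\<^sup>2) \<le> norm (2 * (f x)\<^sup>2 + 2 * (h x)\<^sup>2)"
  proof (rule AE_I2)
    fix x
    have "0 \<le> (f x + h x)\<^sup>2" by simp
    then have "(f x - h x)\<^sup>2 \<le> 2 * (f x)\<^sup>2 + 2 * (h x)\<^sup>2" by (simp add: power2_eq_square algebra_simps)
    then show "norm ((f x - h x)\<^sup>2) \<le> norm (2 * (f x)\<^sup>2 + 2 * (h x)\<^sup>2)" by simp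
  qed
qed

lemma poly_meas[measurable]: "(\<lambda>x. poly (p :: real poly) x) \<in> borel_measurable borel"
  by (intro borel_measurable_continuous_onI) (use continuous_on_poly[OF continuous_on_id, of UNIV p] in simp)

lemma range_shift: "range (\<lambda>i::nat. i + m) = {m..}"
proof
  show "{m..} \<subseteq> range (\<lambda>i::nat. i + m)"
  proof
    fix x assume "x \<in> {m..}"
    then have "x = (x - m) + m" by simp
    then show "x \<in> range (\<lambda>i::nat. i + m)" by blast
  qed
qed auto

context geg begin

lemma meas_mu: "f \<in> borel_measurable borel \<Longrightarrow> f \<in> borel_measurable (mu d)"
  unfolding mu_ww by simp

lemma poly_SS: "poly (SS n) x = (\<Sum>l<n. Bdk d l * AA l * Geg d l x)"
  unfolding SS_def by (simp add: poly_sum poly_Gp)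

lemma TN_eq: "1 / (Beta (1/2) ((real d - 1) / 2) * (real d - 1)) * Geg d 0 x
               + 1/2 * Geg d 1 x
               + (\<Sum>k\<in>{1..N}. (-1) ^ (k + 1) * dfact (2 * int k - 3)
                    / (Beta (1/2) ((real d - 1) / 2) * (\<Prod>j\<in>{0..k}. real d + 2 * real j - 1))
                    * Bdk d (2 * k) * Geg d (2 * k) x) = poly (SS (2 * N + 2)) x"
proof (induction N)
  case 0
  have "Bdk d 1 = real d" unfolding Bdk_def using d2 by (simp add: Suc_diff_le numeral_3_eq_3 numeral_2_eq_2)
  then show ?case unfolding poly_SS using d2
    by (simp add: numeral_2_eq_2 AA0 AA1[unfolded One_nat_def] Bdk_def bet_def mult.commute del: Geg.simps)
next
  case (Suc N)
  define F where "F k = (-1) ^ (k + 1) * dfact (2 * int k - 3)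
                    / (Beta (1/2) ((real d - 1) / 2) * (\<Prod>j\<in>{0..k}. real d + 2 * real j - 1))
                    * Bdk d (2 * k) * Geg d (2 * k) x" for k
  have idx: "2 * Suc N + 2 = Suc (Suc (2 * N + 2))" by simp
  have odd0: "AA (Suc (2 * N + 2)) = 0" using UA_odd[of N] by (simp add: numeral_3_eq_3)
  have ev: "AA (2 * N + 2) = (-1) ^ N * dfact (2 * int N - 1) / (bet d * PP d (N + 2))"
    using UA_even[of N] by simp
  have pr: "(\<Prod>j\<in>{0..Suc N}. real d + 2 * real j - 1) = PP d (N + 2)"
    unfolding PP_def by (simp add: atLeastLessThanSuc_atLeastAtMost)
  have df: "2 * int (Suc N) - 3 = 2 * int N - 1" by simp
  have i2: "2 * Suc N = 2 * N + 2" by simp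
  have sg: "(-1) ^ (Suc N + 1) = ((-1) ^ N :: real)" by simp
  have "poly (SS (2 * Suc N + 2)) x = poly (SS (2 * N + 2)) x + Bdk d (2 * N + 2) * AA (2 * N + 2) * Geg d (2 * N + 2) x
         + Bdk d (Suc (2 * N + 2)) * AA (Suc (2 * N + 2)) * Geg d (Suc (2 * N + 2)) x"
    unfolding idx poly_SS by (simp only: sum.lessThan_Suc add.assoc)
  also have "\<dots> = poly (SS (2 * N + 2)) x + Bdk d (2 * N + 2) * AA (2 * N + 2) * Geg d (2 * N + 2) x"
    unfolding odd0 by simp
  finally have A: "poly (SS (2 * Suc N + 2)) x = poly (SS (2 * N + 2)) x + Bdk d (2 * N + 2) * AA (2 * N + 2) * Geg d (2 * N + 2) x" .
  have B: "F (Suc N) = Bdk d (2 * N + 2) * AA (2 * N + 2) * Geg d (2 * N + 2) x"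
    unfolding F_def ev pr df i2 sg bet_def[symmetric] by (simp only: mult_ac times_divide_eq_left times_divide_eq_right)
  have C: "(\<Sum>k\<in>{1..Suc N}. F k) = (\<Sum>k\<in>{1..N}. F k) + F (Suc N)"
    by (simp add: sum.cl_ivl_Suc)
  show ?case unfolding F_def[symmetric] C A B using Suc.IH unfolding F_def[symmetric] by simp
qed

lemma part1: "(\<lambda>N. \<integral>x. (relu x
            - (1 / (Beta (1/2) ((real d - 1) / 2) * (real d - 1)) * Geg d 0 x
               + 1/2 * Geg d 1 x
               + (\<Sum>k\<in>{1..N}. (-1) ^ (k + 1) * dfact (2 * int k - 3)
                    / (Beta (1/2) ((real d - 1) / 2) * (\<Prod>j\<in>{0..k}. real d + 2 * real j - 1))
                    * Bdk d (2 * k) * Geg d (2 * k) x)))\<^sup>2 \<partial>mu d)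
          \<longlonglongrightarrow> 0"
proof -
  have sm: "strict_mono (\<lambda>N::nat. 2 * N + 2)" by (rule strict_monoI) simp
  have "(\<lambda>N. EE (SS (2 * N + 2))) \<longlonglongrightarrow> 0"
    using LIMSEQ_subseq_LIMSEQ[OF EE_SS_lim sm] by (simp add: o_def)
  then show ?thesis unfolding TN_eq sq_int(2) .
qed

lemma Pk_relu: "Pk d l relu x = Bdk d l * AA l * Geg d l x"
proof -
  have "(\<integral>y. relu y * Geg d l y \<partial>mu d) = (\<integral>y. relu y * poly (Gp d l) y \<partial>mu d)"
    by (simp add: poly_Gp)
  also have "\<dots> = AA l" unfolding AA_def by (rule int_relu_poly(2))
  finally show ?thesis unfolding Pk_def by simp
qed

definition TT :: "nat \<Rightarrow> nat \<Rightarrow> real poly" where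
  "TT m N = (\<Sum>l\<in>{2 * m..<N}. smult (Bdk d l * AA l) (Gp d l))"

lemma sum_Pk: "(\<Sum>l\<in>{k..<N}. Pk d l relu x) = poly (\<Sum>l\<in>{k..<N}. smult (Bdk d l * AA l) (Gp d l)) x"
  by (simp add: poly_sum Pk_relu poly_Gp)

lemma SS_split: "k \<le> N \<Longrightarrow> SS N = SS k + (\<Sum>l\<in>{k..<N}. smult (Bdk d l * AA l) (Gp d l))"
  unfolding SS_def lessThan_atLeast0 by (simp add: sum.atLeastLessThan_concat)

lemma part2:
  assumes m: "m \<ge> 1"
  shows "((\<lambda>k. (dfact (2 * int k - 3))\<^sup>2 * Bdk d (2 * k)
                 / ((Beta (1/2) ((real d - 1) / 2))\<^sup>2 * (\<Prod>j\<in>{0..k}. (real d + 2 * real j - 1)\<^sup>2)))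
             has_sum L2sq d (Pge d (2 * m) relu)) {m..}"
proof -
  define s where "s N x = (\<Sum>l\<in>{2 * m..<N}. Pk d l relu x)" for N x
  define sp where "sp N = (\<Sum>l\<in>{2 * m..<N}. smult (Bdk d l * AA l) (Gp d l))" for N
  have s_sp: "s N x = poly (sp N) x" for N x unfolding s_def sp_def by (rule sum_Pk)
  define P where "P g \<longleftrightarrow> g \<in> borel_measurable (mu d) \<and> integrable (mu d) (\<lambda>x. (g x)\<^sup>2) \<and>
      (\<lambda>N. \<integral>x. (g x - (\<Sum>l\<in>{2 * m..<N}. Pk d l relu x))\<^sup>2 \<partial>mu d) \<longlonglongrightarrow> 0" for g
  define g0 where "g0 x = relu x - poly (SS (2 * m)) x" for x
  have g0m[measurable]: "g0 \<in> borel_measurable borel" unfolding g0_def by measurable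
  have g0i: "integrable (mu d) (\<lambda>x. (g0 x)\<^sup>2)" unfolding g0_def by (rule sq_int)
  have g0I: "(\<integral>x. (g0 x)\<^sup>2 \<partial>mu d) = EE (SS (2 * m))" unfolding g0_def by (rule sq_int)
  have g0lim: "(\<lambda>N. \<integral>x. (g0 x - s N x)\<^sup>2 \<partial>mu d) \<longlonglongrightarrow> 0"
  proof -
    have ev: "eventually (\<lambda>N. EE (SS N) = (\<integral>x. (g0 x - s N x)\<^sup>2 \<partial>mu d)) sequentially"
      unfolding eventually_at_top_linorder
    proof (intro exI allI impI)
      fix N assume N: "N \<ge> 2 * m"
      have "g0 x - s N x = relu x - poly (SS N) x" for x
        unfolding g0_def s_sp sp_def SS_split[OF N] by simp
      then show "EE (SS N) = (\<integral>x. (g0 x - s N x)\<^sup>2 \<partial>mu d)" using sq_int(2) by simp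
    qed
    show ?thesis by (rule iffD1[OF tendsto_cong[OF ev] EE_SS_lim])
  qed
  have g0lim': "(\<lambda>N. \<integral>x. (g0 x - (\<Sum>l\<in>{2 * m..<N}. Pk d l relu x))\<^sup>2 \<partial>mu d) \<longlonglongrightarrow> 0"
    using g0lim unfolding s_def .
  have Pg0: "P g0" unfolding P_def using meas_mu[OF g0m] g0i g0lim' by (intro conjI)
  define G where "G = Pge d (2 * m) relu"
  have PS: "P (SOME g. P g)" by (rule someI[of P g0, OF Pg0])
  have GS: "G = (SOME g. P g)" unfolding G_def Pge_def P_def ..
  have PG: "P G" unfolding GS by (rule PS)
  have Gm[measurable]: "G \<in> borel_measurable (mu d)" and Gi: "integrable (mu d) (\<lambda>x. (G x)\<^sup>2)"
    and Glim': "(\<lambda>N. \<integral>x. (G x - (\<Sum>l\<in>{2 * m..<N}. Pk d l relu x))\<^sup>2 \<partial>mu d) \<longlonglongrightarrow> 0"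
    using PG unfolding P_def by blast+
  have Glim: "(\<lambda>N. \<integral>x. (G x - s N x)\<^sup>2 \<partial>mu d) \<longlonglongrightarrow> 0" unfolding s_def by (rule Glim')
  have g0m': "g0 \<in> borel_measurable (mu d)" by (rule meas_mu[OF g0m])
  have sm[measurable]: "s N \<in> borel_measurable (mu d)" for N
    unfolding s_sp[abs_def] by (rule meas_mu) measurable
  have si: "integrable (mu d) (\<lambda>x. (s N x)\<^sup>2)" for N
    unfolding s_sp using int_poly(1)[of "sp N * sp N"] by (simp add: power2_eq_square)
  have i1: "integrable (mu d) (\<lambda>x. (G x - s N x)\<^sup>2)" for N by (rule sqdiff_int[OF Gm sm Gi si])
  have i2: "integrable (mu d) (\<lambda>x. (g0 x - s N x)\<^sup>2)" for N by (rule sqdiff_int[OF g0m' sm g0i si])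
  have i3: "integrable (mu d) (\<lambda>x. (G x - g0 x)\<^sup>2)" by (rule sqdiff_int[OF Gm g0m' Gi g0i])
  have bnd: "(\<integral>x. (G x - g0 x)\<^sup>2 \<partial>mu d) \<le> 2 * (\<integral>x. (G x - s N x)\<^sup>2 \<partial>mu d) + 2 * (\<integral>x. (g0 x - s N x)\<^sup>2 \<partial>mu d)" for N
  proof -
    have "(\<integral>x. (G x - g0 x)\<^sup>2 \<partial>mu d) \<le> (\<integral>x. 2 * (G x - s N x)\<^sup>2 + 2 * (g0 x - s N x)\<^sup>2 \<partial>mu d)"
    proof (rule integral_mono)
      show "integrable (mu d) (\<lambda>x. 2 * (G x - s N x)\<^sup>2 + 2 * (g0 x - s N x)\<^sup>2)" using i1 i2 by simp
      fix x
      have "0 \<le> (G x + g0 x - 2 * s N x)\<^sup>2" by simp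
      then show "(G x - g0 x)\<^sup>2 \<le> 2 * (G x - s N x)\<^sup>2 + 2 * (g0 x - s N x)\<^sup>2"
        by (simp add: power2_eq_square algebra_simps)
    qed (rule i3)
    also have "\<dots> = 2 * (\<integral>x. (G x - s N x)\<^sup>2 \<partial>mu d) + 2 * (\<integral>x. (g0 x - s N x)\<^sup>2 \<partial>mu d)"
      using i1 i2 by simp
    finally show ?thesis .
  qed
  have "(\<lambda>N. 2 * (\<integral>x. (G x - s N x)\<^sup>2 \<partial>mu d) + 2 * (\<integral>x. (g0 x - s N x)\<^sup>2 \<partial>mu d)) \<longlonglongrightarrow> 2 * 0 + 2 * 0"
    by (intro tendsto_intros Glim g0lim)
  then have lim0: "(\<lambda>N. 2 * (\<integral>x. (G x - s N x)\<^sup>2 \<partial>mu d) + 2 * (\<integral>x. (g0 x - s N x)\<^sup>2 \<partial>mu d)) \<longlonglongrightarrow> 0"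
    by simp
  have "(\<integral>x. (G x - g0 x)\<^sup>2 \<partial>mu d) \<le> 0"
    by (rule LIMSEQ_le_const[OF lim0]) (use bnd in blast)
  moreover have "(\<integral>x. (G x - g0 x)\<^sup>2 \<partial>mu d) \<ge> 0" by (rule integral_nonneg_AE) simp
  ultimately have "(\<integral>x. (G x - g0 x)\<^sup>2 \<partial>mu d) = 0" by simp
  then have "AE x in mu d. (G x - g0 x)\<^sup>2 = 0" using integral_nonneg_eq_0_iff_AE[OF i3] by simp
  then have ae: "AE x in mu d. (G x)\<^sup>2 = (g0 x)\<^sup>2" by eventually_elim simp
  have L2: "L2sq d G = EE (SS (2 * m))"
    unfolding L2sq_def g0I[symmetric] by (rule integral_cong_AE) (use ae g0m' in simp_all)
  define u where "u k = (dfact (2 * int k - 3))\<^sup>2 * Bdk d (2 * k)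
                 / ((Beta (1/2) ((real d - 1) / 2))\<^sup>2 * (\<Prod>j\<in>{0..k}. (real d + 2 * real j - 1)\<^sup>2))" for k
  have u_eq: "u k = Bdk d (2 * k) * (AA (2 * k))\<^sup>2" if k: "k \<ge> 1" for k
  proof -
    obtain k' where k': "k = Suc k'" using k by (cases k) auto
    have ev: "AA (2 * k) = (-1) ^ k' * dfact (2 * int k' - 1) / (bet d * PP d (k' + 2))"
      using UA_even[of k'] k' by simp
    have pr0: "(\<Prod>j\<in>{0..k}. real d + 2 * real j - 1) = PP d (k' + 2)"
      unfolding PP_def k' by (simp add: atLeastLessThanSuc_atLeastAtMost)
    have pr: "(\<Prod>j\<in>{0..k}. (real d + 2 * real j - 1)\<^sup>2) = (PP d (k' + 2))\<^sup>2"
      unfolding pr0[symmetric] by (rule prod_power_distrib[symmetric])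
    have df: "2 * int k - 3 = 2 * int k' - 1" using k' by simp
    have sq1: "((-1::real) ^ k')\<^sup>2 = 1" by (simp add: power2_eq_square power_mult_distrib[symmetric])
    show ?thesis unfolding u_def ev pr df bet_def[symmetric] using sq1 by (simp add: power_mult_distrib power_divide)
  qed
  have u_nn: "u k \<ge> 0" for k unfolding u_def
    by (intro divide_nonneg_nonneg mult_nonneg_nonneg prod_nonneg zero_le_power2 less_imp_le[OF Bdk_pos])
  have step: "EE (SS (2 * k + 2)) = EE (SS (2 * k)) - u k" if k1: "k \<ge> 1" for k
  proof -
    obtain k' where k': "k = Suc k'" using k1 by (cases k) auto
    have "AA (2 * k + 1) = 0" using UA_odd[of k'] k' by (simp add: numeral_3_eq_3)
    then have "EE (SS (2 * k + 2)) = EE (SS (2 * k)) - Bdk d (2 * k) * (AA (2 * k))\<^sup>2"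
      using EE_SS_Suc[of "2 * k"] EE_SS_Suc[of "Suc (2 * k)"] by (simp add: numeral_2_eq_2)
    then show ?thesis using u_eq[OF k1] by simp
  qed
  have ps: "(\<Sum>i<K. u (i + m)) = EE (SS (2 * m)) - EE (SS (2 * (m + K)))" for K
  proof (induction K)
    case (Suc K)
    have "EE (SS (2 * (m + Suc K))) = EE (SS (2 * (m + K))) - u (K + m)"
      using step[of "m + K"] m by (simp add: algebra_simps)
    then show ?case using Suc by simp
  qed simp
  have "(\<lambda>K. EE (SS (2 * m)) - EE (SS (2 * (m + K)))) \<longlonglongrightarrow> EE (SS (2 * m)) - 0"
  proof (intro tendsto_intros)
    have sm2: "strict_mono (\<lambda>K::nat. 2 * (m + K))" by (rule strict_monoI) simp
    show "(\<lambda>K. EE (SS (2 * (m + K)))) \<longlonglongrightarrow> 0"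
      using LIMSEQ_subseq_LIMSEQ[OF EE_SS_lim sm2] by (simp add: o_def)
  qed
  then have "(\<lambda>i. u (i + m)) sums EE (SS (2 * m))" unfolding sums_def ps by simp
  then have "((\<lambda>i. u (i + m)) has_sum EE (SS (2 * m))) UNIV"
    by (rule sums_nonneg_imp_has_sum) (rule u_nn)
  then have "(u has_sum EE (SS (2 * m))) (range (\<lambda>i. i + m))"
    by (subst has_sum_reindex) (auto simp: inj_on_def o_def)
  then have "(u has_sum EE (SS (2 * m))) {m..}" unfolding range_shift .
  then show ?thesis unfolding u_def[abs_def] L2[unfolded G_def, symmetric] .
qed

end

theorem lemma38:
  fixes d :: nat
  assumes "d \<ge> 2"
  shows "((\<lambda>N. \<integral>x. (relu x
            - (1 / (Beta (1/2) ((real d - 1) / 2) * (real d - 1)) * Geg d 0 x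
               + 1/2 * Geg d 1 x
               + (\<Sum>k\<in>{1..N}. (-1) ^ (k + 1) * dfact (2 * int k - 3)
                    / (Beta (1/2) ((real d - 1) / 2) * (\<Prod>j\<in>{0..k}. real d + 2 * real j - 1))
                    * Bdk d (2 * k) * Geg d (2 * k) x)))\<^sup>2 \<partial>mu d)
          \<longlonglongrightarrow> 0)
       \<and> (\<forall>m::nat. m \<ge> 1 \<longrightarrow>
          ((\<lambda>k. (dfact (2 * int k - 3))\<^sup>2 * Bdk d (2 * k)
                 / ((Beta (1/2) ((real d - 1) / 2))\<^sup>2 * (\<Prod>j\<in>{0..k}. (real d + 2 * real j - 1)\<^sup>2)))
             has_sum L2sq d (Pge d (2 * m) relu)) {m..})"
proof -
  interpret geg d using assms by unfold_locales
  show ?thesis using part1 part2 by blast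
qed


end
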